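(* Let $k\ge 1$ and $l\geq 1$ be integers and $n=2^k$. Then for every $1\leq s\leq 2^k$, $a_{l2^{k-1},s}+a_{l2^{k-1},s-2^{k-1}}\equiv 0\pmod{2^l}$.
   Context: Let $D:\mathbb{Z}^n\to\mathbb{Z}^n$, $D(x_1,\dots,x_n)=(x_1+x_2,x_2+x_3,\dots,x_n+x_1)$. For integers $r\ge 0$ and $1\le s\le n$, define the integers $a_{r,s}$ by $D^r(0,0,\dots,0,1)=(a_{r,n},a_{r,n-1},\dots,a_{r,1})$; equivalently, $a_{r,s}$ is the coefficient of $x_s$ in the first coordinate of $D^r(x_1,\dots,x_n)$. The second index is read modulo $n$ (representatives $1,\dots,n$). *)

theory Defs
  imports Main "HOL-Number_Theory.Cong"
begin

text \<open>Vectors in Z^n are modelled as functions int => int, of which only the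
coordinates 1..n matter; indices are read modulo n with representatives 1..n.\<close>

definition idx :: "nat \<Rightarrow> int \<Rightarrow> int" where
  "idx n i = (i - 1) mod int n + 1"

definition D :: "nat \<Rightarrow> (int \<Rightarrow> int) \<Rightarrow> (int \<Rightarrow> int)" where
  "D n x = (\<lambda>i. x (idx n i) + x (idx n (i + 1)))"

text \<open>a n r s: the coefficient of x_s in the first coordinate of D^r(x),
 i.e. the first coordinate of D^r applied to the s-th unit vector
 (second index read modulo n).\<close>
definition a :: "nat \<Rightarrow> nat \<Rightarrow> int \<Rightarrow> int" where
  "a n r s = ((D n ^^ r) (\<lambda>i. if idx n i = idx n s then 1 else 0)) 1"

end

theory Submission
  imports Defs
begin

definition Dp :: "(int \<Rightarrow> int) \<Rightarrow> (int \<Rightarrow> int)" where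
  "Dp f = (\<lambda>i. f i + f (i + 1))"

lemma Dp_add: "(Dp ^^ r) (\<lambda>i. f i + g i) = (\<lambda>i. (Dp ^^ r) f i + (Dp ^^ r) g i)"
  by (induction r) (auto simp: Dp_def)

lemma Dp_mult: "(Dp ^^ r) (\<lambda>i. c * f i) = (\<lambda>i. c * (Dp ^^ r) f i)"
  by (induction r) (auto simp: Dp_def algebra_simps)

lemma Dp_shift: "(Dp ^^ r) (\<lambda>i. f (i + c)) = (\<lambda>i. (Dp ^^ r) f (i + c))"
  by (induction r) (auto simp: Dp_def algebra_simps)

lemma Dp_per: "\<forall>i. f (i + c) = f i \<Longrightarrow> (Dp ^^ r) f (i + c) = (Dp ^^ r) f i"
proof -
  assume h: "\<forall>i. f (i + c) = f i"
  have "(\<lambda>i. f (i + c)) = f" using h by auto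
  then have "(Dp ^^ r) f = (\<lambda>i. (Dp ^^ r) f (i + c))" using Dp_shift[of r f c] by simp
  then show ?thesis by (metis)
qed

lemma L1: "2 dvd ((Dp ^^ (2 ^ t)) f i - f i - f (i + 2 ^ t))"
proof (induction t arbitrary: f i)
  case 0
  then show ?case by (simp add: Dp_def)
next
  case (Suc t)
  define p :: nat where "p = 2 ^ t"
  define E where "E = Dp ^^ p"
  define h where "h = (\<lambda>i. (E f i - f i - f (i + int p)) div 2)"
  have Ef: "E f = (\<lambda>i. f i + f (i + int p) + 2 * h i)"
    using Suc.IH[of f] unfolding h_def E_def p_def by fastforce
  have EE: "(Dp ^^ (2 ^ Suc t)) f = E (E f)"
    unfolding E_def p_def by (simp add: funpow_add mult_2)
  have "E (E f) = (\<lambda>i. E f i + E (\<lambda>i. f (i + int p)) i + 2 * E h i)"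
  proof -
    have "E (E f) = E (\<lambda>i. (f i + f (i + int p)) + 2 * h i)" by (simp only: Ef)
    also have "\<dots> = (\<lambda>i. E (\<lambda>i. f i + f (i + int p)) i + E (\<lambda>i. 2 * h i) i)"
      unfolding E_def by (rule Dp_add)
    also have "\<dots> = (\<lambda>i. E f i + E (\<lambda>i. f (i + int p)) i + 2 * E h i)"
      unfolding E_def by (simp add: Dp_add Dp_mult)
    finally show ?thesis .
  qed
  also have "\<dots> = (\<lambda>i. E f i + E f (i + int p) + 2 * E h i)"
    unfolding E_def by (simp add: Dp_shift)
  finally have "E (E f) i = f i + f (i + int p) + 2 * h i + (f (i + int p) + f (i + int p + int p) + 2 * h (i + int p)) + 2 * E h i"
    by (simp add: Ef)
  then have "(Dp ^^ (2 ^ Suc t)) f i - f i - f (i + 2 ^ Suc t) = 2 * (f (i + int p) + h i + h (i + int p) + E h i)"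
    using EE by (simp add: p_def algebra_simps)
  then show ?case by simp
qed

lemma M:
  fixes t l :: nat
  defines "m \<equiv> (2::int) ^ t"
  shows "\<forall>i. f (i + 2 * m) = f i \<Longrightarrow>
    \<exists>g. (\<forall>i. g (i + 2 * m) = g i) \<and>
      (Dp ^^ (l * 2 ^ t)) (\<lambda>i. f i + f (i + m)) = (\<lambda>i. 2 ^ l * (g i + g (i + m)))"
proof (induction l)
  case 0
  then show ?case by (rule_tac x=f in exI) auto
next
  case (Suc l)
  then obtain g where gp: "\<forall>i. g (i + 2 * m) = g i"
    and gE: "(Dp ^^ (l * 2 ^ t)) (\<lambda>i. f i + f (i + m)) = (\<lambda>i. 2 ^ l * (g i + g (i + m)))"
    by blast
  define E where "E = Dp ^^ (2 ^ t)"
  define h where "h = (\<lambda>i. (E g i - g i - g (i + m)) div 2)"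
  have Eg: "\<And>i. E g i = g i + g (i + m) + 2 * h i"
    using L1[of t g] unfolding h_def E_def m_def by fastforce
  have Egp: "\<forall>i. E g (i + 2 * m) = E g i" unfolding E_def using gp Dp_per by blast
  have hp: "\<forall>i. h (i + 2 * m) = h i"
  proof
    fix i
    have "g (i + 2 * m + m) = g (i + m)" using gp by (metis add.commute add.left_commute)
    then show "h (i + 2 * m) = h i" unfolding h_def using gp Egp by simp
  qed
  have "(Dp ^^ (Suc l * 2 ^ t)) (\<lambda>i. f i + f (i + m)) = E ((Dp ^^ (l * 2 ^ t)) (\<lambda>i. f i + f (i + m)))"
    unfolding E_def by (simp add: funpow_add)
  also have "\<dots> = (\<lambda>i. 2 ^ l * (E g i + E g (i + m)))"
    unfolding gE E_def by (simp add: Dp_mult Dp_add Dp_shift)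
  also have "\<dots> = (\<lambda>i. 2 ^ Suc l * ((g i + h i) + (g (i + m) + h (i + m))))"
  proof
    fix i
    have "g (i + m + m) = g i" using gp by (metis add.assoc mult_2)
    then show "2 ^ l * (E g i + E g (i + m)) = 2 ^ Suc l * ((g i + h i) + (g (i + m) + h (i + m)))"
      by (simp add: Eg algebra_simps)
  qed
  finally show ?case
    by (rule_tac x="\<lambda>i. g i + h i" in exI) (use gp hp in auto)
qed

lemma idx_eq: "n > 0 \<Longrightarrow> idx n x = idx n y \<longleftrightarrow> int n dvd (x - y)"
  unfolding idx_def by (simp add: mod_eq_dvd_iff)

lemma idx_shift: "n > 0 \<Longrightarrow> idx n (idx n i + c) = idx n (i + c)"
proof -
  assume n: "n > 0"
  have "idx n i + c - (i + c) = - (int n * ((i - 1) div int n))"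
    unfolding idx_def using div_mult_mod_eq[of "i - 1" "int n"] by (simp add: algebra_simps)
  then have "int n dvd (idx n i + c - (i + c))" by simp
  then show ?thesis using idx_eq[OF n] by blast
qed

lemma idx_idem: "n > 0 \<Longrightarrow> idx n (idx n i) = idx n i"
  using idx_shift[of n i 0] by simp

definition per :: "nat \<Rightarrow> (int \<Rightarrow> int) \<Rightarrow> bool" where
  "per n f \<longleftrightarrow> (\<forall>i. f (idx n i) = f i)"

lemma per_D: "n > 0 \<Longrightarrow> per n f \<Longrightarrow> D n f = Dp f"
  unfolding per_def D_def Dp_def by auto

lemma per_Dp: "n > 0 \<Longrightarrow> per n f \<Longrightarrow> per n (Dp f)"
  unfolding per_def Dp_def by (metis idx_shift)

lemma per_Dpow: "n > 0 \<Longrightarrow> per n f \<Longrightarrow> (D n ^^ r) f = (Dp ^^ r) f"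
proof (induction r arbitrary: f)
  case 0
  then show ?case by simp
next
  case (Suc r)
  have "(D n ^^ Suc r) f = (D n ^^ r) (D n f)" by (simp add: funpow_Suc_right del: funpow.simps)
  also have "\<dots> = (Dp ^^ r) (Dp f)" using Suc per_D per_Dp by metis
  also have "\<dots> = (Dp ^^ Suc r) f" by (simp add: funpow_Suc_right del: funpow.simps)
  finally show ?case .
qed

lemma per_period: "n > 0 \<Longrightarrow> per n f \<Longrightarrow> f (i + int n) = f i"
  unfolding per_def by (metis idx_eq add_diff_cancel_left' dvd_refl diff_add_cancel)

theorem lemma4p6:
  fixes k l :: nat and s :: int
  assumes "k \<ge> 1" and "l \<ge> 1"
    and "1 \<le> s" and "s \<le> 2 ^ k"
  shows "[a (2 ^ k) (l * 2 ^ (k - 1)) s + a (2 ^ k) (l * 2 ^ (k - 1)) (s - 2 ^ (k - 1)) = 0] (mod (2 ^ l))"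
proof -
  define t where "t = k - 1"
  define n :: nat where "n = 2 ^ k"
  define m :: int where "m = 2 ^ t"
  have kt: "k = Suc t" using assms(1) unfolding t_def by simp
  have n0: "n > 0" unfolding n_def by simp
  have nm: "int n = 2 * m" unfolding n_def m_def kt by simp
  define e where "e = (\<lambda>i. if idx n i = idx n s then 1 else (0::int))"
  define e' where "e' = (\<lambda>i. if idx n i = idx n (s - m) then 1 else (0::int))"
  have pe: "per n e" unfolding per_def e_def using idx_idem[OF n0] by simp
  have pe': "per n e'" unfolding per_def e'_def using idx_idem[OF n0] by simp
  have ee': "e' = (\<lambda>i. e (i + m))"
  proof
    fix i
    have "idx n i = idx n (s - m) \<longleftrightarrow> idx n (i + m) = idx n s"
      using idx_eq[OF n0] by (simp add: algebra_simps)
    then show "e' i = e (i + m)" unfolding e_def e'_def by simp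
  qed
  have ep: "\<forall>i. e (i + 2 * m) = e i" using per_period[OF n0 pe] nm by metis
  obtain g where gE: "(Dp ^^ (l * 2 ^ t)) (\<lambda>i. e i + e (i + m)) = (\<lambda>i. 2 ^ l * (g i + g (i + m)))"
    using M[where t=t and l=l and f=e] ep unfolding m_def by blast
  have "a (2 ^ k) (l * 2 ^ (k - 1)) s + a (2 ^ k) (l * 2 ^ (k - 1)) (s - 2 ^ (k - 1))
      = (Dp ^^ (l * 2 ^ t)) e 1 + (Dp ^^ (l * 2 ^ t)) e' 1"
    unfolding a_def using per_Dpow[OF n0 pe] per_Dpow[OF n0 pe']
    by (simp add: e_def e'_def n_def m_def t_def)
  also have "\<dots> = (Dp ^^ (l * 2 ^ t)) (\<lambda>i. e i + e (i + m)) 1"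
    unfolding ee' by (simp add: Dp_add)
  also have "\<dots> = 2 ^ l * (g 1 + g (1 + m))" using gE by simp
  finally show ?thesis by (simp add: cong_0_iff)
qed

end
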